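(* Let $X$ take values in a finite set $\mathcal X$ with $\mathbb{P}(X=x)>0$ for all $x$, let $Y\in[M]$ ($M\ge 2$), $R\in\{0,1\}$, and let $F$ take values in a finite set $\mathcal F$. Assume $F$ is conditionally independent of $R$ given $(Y,X)$, $\mathbb{P}(R=1\mid Y=y,X=x)>0$ for all $x,y$, $\mathbb{P}(R=1,Y=y\mid X=x)>0$ for all $x,y$, and $\mathbb{P}(R=0\mid X=x)>0$ for all $x$. With $\alpha_x(f,y)=\mathbb{P}(R=1,F=f,Y=y\mid X=x)$, $\beta_x(f)=\mathbb{P}(R=0,F=f\mid X=x)$, $A_x=[\alpha_x(f,y)]_{f,y}=[\mathbf a_{x,1},\dots,\mathbf a_{x,M}]$ (columns $\mathbf a_{x,y}\in\mathbb{R}^{|\mathcal F|}$), $\boldsymbol\beta_x=(\beta_x(f))_f$, and $D=\mathrm{diag}(1,\dots,M)$, define \[\theta^{\mathrm{shad}}_{\max}=\sum_{x}\mathbb{P}(X=x)\max\{\mathbf 1^\top A_xD(\mathbf w+\mathbf 1):A_x\mathbf w=\boldsymbol\beta_x,\ \mathbf w\ge\mathbf 0\},\quad \theta^{\mathrm{shad}}_{\min}=\sum_{x}\mathbb{P}(X=x)\min\{\mathbf 1^\top A_xD(\mathbf w+\mathbf 1):A_x\mathbf w=\boldsymbol\beta_x,\ \mathbf w\ge\mathbf 0\},\] and $\theta_{\max}=\mathbb{E}[Y\mathbf 1\{R=1\}]+M\,\mathbb{P}(R=0)$, $\theta_{\min}=\mathbb{E}[Y\mathbf 1\{R=1\}]+\mathbb{P}(R=0)$.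 Then \[\theta_{\max}-\theta^{\mathrm{shad}}_{\max}\ \ge\ \sum_{x\in\mathcal X}\frac{\mathbf 1^\top\boldsymbol\beta_x}{2}\Big\|\frac{\boldsymbol\beta_x}{\mathbf 1^\top\boldsymbol\beta_x}-\frac{\mathbf a_{x,M}}{\mathbf 1^\top\mathbf a_{x,M}}\Big\|_1\mathbb{P}(X=x)\ \ge 0,\] \[\theta^{\mathrm{shad}}_{\min}-\theta_{\min}\ \ge\ \sum_{x\in\mathcal X}\frac{\mathbf 1^\top\boldsymbol\beta_x}{2}\Big\|\frac{\boldsymbol\beta_x}{\mathbf 1^\top\boldsymbol\beta_x}-\frac{\mathbf a_{x,1}}{\mathbf 1^\top\mathbf a_{x,1}}\Big\|_1\mathbb{P}(X=x)\ \ge 0.\]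
   Context: $[\theta_{\min},\theta_{\max}]$ is the identification interval for $\mathbb{E}[Y]$ under outcome-dependent missingness without using $F$; $[\theta^{\mathrm{shad}}_{\min},\theta^{\mathrm{shad}}_{\max}]$ is the identification interval when the auxiliary prediction $F$ (satisfying $F\perp R\mid Y,X$) is also observed. Note $\mathbf 1^\top\boldsymbol\beta_x=\mathbb{P}(R=0\mid X=x)$ and $\mathbf 1^\top\mathbf a_{x,y}=\mathbb{P}(R=1,Y=y\mid X=x)$. *)

theory Defs
  imports Complex_Main
begin

text \<open>The joint law of (X, Y, R, F) is given by a probability mass function
  p x y r f = P(X=x, Y=y, R=r, F=f), with X in the finite type 'x, Y in {1..M},
  R in bool (True = 1), F in the finite type 'f.\<close>

definition is_joint_pmf :: "nat \<Rightarrow> ('x::finite \<Rightarrow> nat \<Rightarrow> bool \<Rightarrow> 'f::finite \<Rightarrow> real) \<Rightarrow> bool" where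
  "is_joint_pmf M p \<longleftrightarrow>
     (\<forall>x y r f. p x y r f \<ge> 0) \<and>
     (\<forall>x y r f. y \<notin> {1..M} \<longrightarrow> p x y r f = 0) \<and>
     (\<Sum>x\<in>UNIV. \<Sum>y\<in>{1..M}. \<Sum>r\<in>UNIV. \<Sum>f\<in>UNIV. p x y r f) = 1"

definition PX :: "nat \<Rightarrow> ('x::finite \<Rightarrow> nat \<Rightarrow> bool \<Rightarrow> 'f::finite \<Rightarrow> real) \<Rightarrow> 'x \<Rightarrow> real" where
  "PX M p x = (\<Sum>y\<in>{1..M}. \<Sum>r\<in>UNIV. \<Sum>f\<in>UNIV. p x y r f)"

definition PYX :: "('x::finite \<Rightarrow> nat \<Rightarrow> bool \<Rightarrow> 'f::finite \<Rightarrow> real) \<Rightarrow> nat \<Rightarrow> 'x \<Rightarrow> real" where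
  "PYX p y x = (\<Sum>r\<in>UNIV. \<Sum>f\<in>UNIV. p x y r f)"

definition PRYX :: "('x::finite \<Rightarrow> nat \<Rightarrow> bool \<Rightarrow> 'f::finite \<Rightarrow> real) \<Rightarrow> bool \<Rightarrow> nat \<Rightarrow> 'x \<Rightarrow> real" where
  "PRYX p r y x = (\<Sum>f\<in>UNIV. p x y r f)"

definition PFYX :: "('x::finite \<Rightarrow> nat \<Rightarrow> bool \<Rightarrow> 'f::finite \<Rightarrow> real) \<Rightarrow> 'f \<Rightarrow> nat \<Rightarrow> 'x \<Rightarrow> real" where
  "PFYX p f y x = (\<Sum>r\<in>UNIV. p x y r f)"

definition PRX :: "nat \<Rightarrow> ('x::finite \<Rightarrow> nat \<Rightarrow> bool \<Rightarrow> 'f::finite \<Rightarrow> real) \<Rightarrow> bool \<Rightarrow> 'x \<Rightarrow> real" where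
  "PRX M p r x = (\<Sum>y\<in>{1..M}. \<Sum>f\<in>UNIV. p x y r f)"

text \<open>F conditionally independent of R given (Y, X):
  P(F=f,R=r | Y=y,X=x) = P(F=f | Y=y,X=x) P(R=r | Y=y,X=x), written multiplicatively.\<close>
definition cond_indep_F_R :: "('x::finite \<Rightarrow> nat \<Rightarrow> bool \<Rightarrow> 'f::finite \<Rightarrow> real) \<Rightarrow> bool" where
  "cond_indep_F_R p \<longleftrightarrow>
     (\<forall>x y r f. p x y r f * PYX p y x = PFYX p f y x * PRYX p r y x)"

definition alpha :: "nat \<Rightarrow> ('x::finite \<Rightarrow> nat \<Rightarrow> bool \<Rightarrow> 'f::finite \<Rightarrow> real) \<Rightarrow> 'x \<Rightarrow> 'f \<Rightarrow> nat \<Rightarrow> real" where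
  "alpha M p x f y = p x y True f / PX M p x"

definition beta :: "nat \<Rightarrow> ('x::finite \<Rightarrow> nat \<Rightarrow> bool \<Rightarrow> 'f::finite \<Rightarrow> real) \<Rightarrow> 'x \<Rightarrow> 'f \<Rightarrow> real" where
  "beta M p x f = (\<Sum>y\<in>{1..M}. p x y False f) / PX M p x"

text \<open>The value set of the LP: { 1^T A_x D (w + 1) : A_x w = beta_x, w >= 0 }, w in R^M
  represented as a function on {1..M}.\<close>
definition lp_values :: "nat \<Rightarrow> ('x::finite \<Rightarrow> nat \<Rightarrow> bool \<Rightarrow> 'f::finite \<Rightarrow> real) \<Rightarrow> 'x \<Rightarrow> real set" where
  "lp_values M p x =
     {(\<Sum>f\<in>UNIV. \<Sum>y\<in>{1..M}. alpha M p x f y * real y * (w y + 1)) | w.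
        (\<forall>y\<in>{1..M}. w y \<ge> 0) \<and>
        (\<forall>f. (\<Sum>y\<in>{1..M}. alpha M p x f y * w y) = beta M p x f)}"

definition theta_shad_max :: "nat \<Rightarrow> ('x::finite \<Rightarrow> nat \<Rightarrow> bool \<Rightarrow> 'f::finite \<Rightarrow> real) \<Rightarrow> real" where
  "theta_shad_max M p = (\<Sum>x\<in>UNIV. PX M p x * Sup (lp_values M p x))"

definition theta_shad_min :: "nat \<Rightarrow> ('x::finite \<Rightarrow> nat \<Rightarrow> bool \<Rightarrow> 'f::finite \<Rightarrow> real) \<Rightarrow> real" where
  "theta_shad_min M p = (\<Sum>x\<in>UNIV. PX M p x * Inf (lp_values M p x))"

definition EY_R1 :: "nat \<Rightarrow> ('x::finite \<Rightarrow> nat \<Rightarrow> bool \<Rightarrow> 'f::finite \<Rightarrow> real) \<Rightarrow> real" where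
  "EY_R1 M p = (\<Sum>x\<in>UNIV. \<Sum>y\<in>{1..M}. \<Sum>f\<in>UNIV. real y * p x y True f)"

definition PR0 :: "nat \<Rightarrow> ('x::finite \<Rightarrow> nat \<Rightarrow> bool \<Rightarrow> 'f::finite \<Rightarrow> real) \<Rightarrow> real" where
  "PR0 M p = (\<Sum>x\<in>UNIV. \<Sum>y\<in>{1..M}. \<Sum>f\<in>UNIV. p x y False f)"

definition theta_max :: "nat \<Rightarrow> ('x::finite \<Rightarrow> nat \<Rightarrow> bool \<Rightarrow> 'f::finite \<Rightarrow> real) \<Rightarrow> real" where
  "theta_max M p = EY_R1 M p + real M * PR0 M p"

definition theta_min :: "nat \<Rightarrow> ('x::finite \<Rightarrow> nat \<Rightarrow> bool \<Rightarrow> 'f::finite \<Rightarrow> real) \<Rightarrow> real" where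
  "theta_min M p = EY_R1 M p + PR0 M p"

definition tv_term :: "nat \<Rightarrow> ('x::finite \<Rightarrow> nat \<Rightarrow> bool \<Rightarrow> 'f::finite \<Rightarrow> real) \<Rightarrow> 'x \<Rightarrow> nat \<Rightarrow> real" where
  "tv_term M p x y =
     (let sb = (\<Sum>f\<in>UNIV. beta M p x f); sa = (\<Sum>f\<in>UNIV. alpha M p x f y)
      in sb / 2 * (\<Sum>f\<in>UNIV. \<bar>beta M p x f / sb - alpha M p x f y / sa\<bar>))"

end

theory Submission
  imports Defs
begin

lemma tv_bound:
  fixes a :: "'f::finite \<Rightarrow> nat \<Rightarrow> real" and b :: "'f \<Rightarrow> real" and w :: "nat \<Rightarrow> real"
  assumes fin: "finite Y" and y0: "y0 \<in> Y" and an: "\<forall>f y. a f y \<ge> 0"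
    and wn: "\<forall>y\<in>Y. w y \<ge> 0" and feas: "\<forall>f. (\<Sum>y\<in>Y. a f y * w y) = b f"
    and sa: "(\<Sum>f\<in>UNIV. a f y0) > 0" and sb: "(\<Sum>f\<in>UNIV. b f) > 0"
  shows "(\<Sum>f\<in>UNIV. b f) / 2 * (\<Sum>f\<in>UNIV. \<bar>b f / (\<Sum>f\<in>UNIV. b f) - a f y0 / (\<Sum>f\<in>UNIV. a f y0)\<bar>)
         \<le> (\<Sum>y\<in>Y-{y0}. (\<Sum>f\<in>UNIV. a f y) * w y)"
proof -
  define SA where "SA = (\<Sum>f\<in>UNIV. a f y0)"
  define SB where "SB = (\<Sum>f\<in>UNIV. b f)"
  define t where "t = (\<Sum>y\<in>Y-{y0}. (\<Sum>f\<in>UNIV. a f y) * w y)"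
  define s where "s f = (\<Sum>y\<in>Y-{y0}. a f y * w y)" for f
  have bf: "b f = s f + a f y0 * w y0" for f
  proof -
    have "(\<Sum>y\<in>Y. a f y * w y) = a f y0 * w y0 + (\<Sum>y\<in>Y-{y0}. a f y * w y)"
      by (rule sum.remove[OF fin y0])
    thus ?thesis using feas[rule_format, of f] unfolding s_def by linarith
  qed
  have st: "(\<Sum>f\<in>UNIV. s f) = t"
    unfolding s_def t_def by (simp add: sum.swap[of _ UNIV] sum_distrib_right)
  have SBt: "SB = t + SA * w y0"
    unfolding SB_def SA_def using bf st by (simp add: sum.distrib sum_distrib_right)
  have sn: "s f \<ge> 0" for f unfolding s_def using an wn by (intro sum_nonneg) auto
  have SAp: "SA > 0" and SBp: "SB > 0" using sa sb SA_def SB_def by auto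
  have eq: "b f / SB - a f y0 / SA = (s f - t * a f y0 / SA) / SB" for f
    using SAp SBp bf SBt by (simp add: field_simps)
  have le: "\<bar>b f / SB - a f y0 / SA\<bar> \<le> (s f + t * a f y0 / SA) / SB" for f
  proof -
    have "t \<ge> 0" using st sn by (metis sum_nonneg)
    hence "t * a f y0 / SA \<ge> 0" using an SAp by simp
    hence "\<bar>s f - t * a f y0 / SA\<bar> \<le> s f + t * a f y0 / SA" using sn[of f] by (auto simp: abs_le_iff)
    hence "\<bar>s f - t * a f y0 / SA\<bar> / SB \<le> (s f + t * a f y0 / SA) / SB"
      using SBp by (intro divide_right_mono) auto
    moreover have "\<bar>(s f - t * a f y0 / SA) / SB\<bar> = \<bar>s f - t * a f y0 / SA\<bar> / SB"
      using SBp by simp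
    ultimately show ?thesis unfolding eq by linarith
  qed
  have "(\<Sum>f\<in>UNIV. \<bar>b f / SB - a f y0 / SA\<bar>) \<le> (\<Sum>f\<in>UNIV. (s f + t * a f y0 / SA) / SB)"
    by (rule sum_mono) (rule le)
  also have "\<dots> = (t + t * SA / SA) / SB"
    by (simp add: sum_divide_distrib[symmetric] sum.distrib st sum_distrib_left[symmetric] SA_def)
  also have "\<dots> = 2 * t / SB" using SAp by simp
  finally have "SB / 2 * (\<Sum>f\<in>UNIV. \<bar>b f / SB - a f y0 / SA\<bar>) \<le> SB / 2 * (2 * t / SB)"
    using SBp by (intro mult_left_mono) auto
  also have "\<dots> = t" using SBp by simp
  finally show ?thesis unfolding SA_def SB_def t_def .
qed

lemma per_x:
  fixes a :: "'f::finite \<Rightarrow> nat \<Rightarrow> real" and b :: "'f \<Rightarrow> real" and w :: "nat \<Rightarrow> real"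
  assumes M: "M \<ge> 1" and an: "\<forall>f y. a f y \<ge> 0"
    and wn: "\<forall>y\<in>{1..M}. w y \<ge> 0" and feas: "\<forall>f. (\<Sum>y\<in>{1..M}. a f y * w y) = b f"
    and sa: "\<forall>y\<in>{1..M}. (\<Sum>f\<in>UNIV. a f y) > 0" and sb: "(\<Sum>f\<in>UNIV. b f) > 0"
  shows "(\<Sum>f\<in>UNIV. \<Sum>y\<in>{1..M}. a f y * real y * (w y + 1)) \<le>
          (\<Sum>y\<in>{1..M}. real y * (\<Sum>f\<in>UNIV. a f y)) + real M * (\<Sum>f\<in>UNIV. b f)
          - (\<Sum>f\<in>UNIV. b f) / 2 * (\<Sum>f\<in>UNIV. \<bar>b f / (\<Sum>f\<in>UNIV. b f) - a f M / (\<Sum>f\<in>UNIV. a f M)\<bar>)"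
    and "(\<Sum>f\<in>UNIV. \<Sum>y\<in>{1..M}. a f y * real y * (w y + 1)) \<ge>
          (\<Sum>y\<in>{1..M}. real y * (\<Sum>f\<in>UNIV. a f y)) + (\<Sum>f\<in>UNIV. b f)
          + (\<Sum>f\<in>UNIV. b f) / 2 * (\<Sum>f\<in>UNIV. \<bar>b f / (\<Sum>f\<in>UNIV. b f) - a f 1 / (\<Sum>f\<in>UNIV. a f 1)\<bar>)"
proof -
  define S where "S y = (\<Sum>f\<in>UNIV. a f y)" for y
  have Sn: "S y * w y \<ge> 0" if "y \<in> {1..M}" for y
    using wn that an unfolding S_def by (simp add: sum_nonneg)
  have V: "(\<Sum>f\<in>UNIV. \<Sum>y\<in>{1..M}. a f y * real y * (w y + 1)) =
     (\<Sum>y\<in>{1..M}. real y * (S y * w y)) + (\<Sum>y\<in>{1..M}. real y * S y)"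
    unfolding S_def
    by (simp add: sum.swap[of _ UNIV] sum_distrib_left sum_distrib_right sum.distrib[symmetric] algebra_simps)
  have SB: "(\<Sum>f\<in>UNIV. b f) = (\<Sum>y\<in>{1..M}. S y * w y)"
    unfolding S_def using feas
    by (simp add: sum.swap[of _ UNIV] sum_distrib_right)
  have M1: "M \<in> {1..M}" "1 \<in> {(1::nat)..M}" using M by auto
  have tM: "(\<Sum>f\<in>UNIV. b f) / 2 * (\<Sum>f\<in>UNIV. \<bar>b f / (\<Sum>f\<in>UNIV. b f) - a f M / (\<Sum>f\<in>UNIV. a f M)\<bar>)
         \<le> (\<Sum>y\<in>{1..M}-{M}. S y * w y)"
    unfolding S_def by (rule tv_bound[OF _ M1(1) an wn feas]) (use sa sb M1 in auto)
  have t1: "(\<Sum>f\<in>UNIV. b f) / 2 * (\<Sum>f\<in>UNIV. \<bar>b f / (\<Sum>f\<in>UNIV. b f) - a f 1 / (\<Sum>f\<in>UNIV. a f 1)\<bar>)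
         \<le> (\<Sum>y\<in>{1..M}-{1}. S y * w y)"
    unfolding S_def by (rule tv_bound[OF _ M1(2) an wn feas]) (use sa sb M1 in auto)
  have A: "(\<Sum>y\<in>{1..M}-{M}. S y * w y) \<le> (\<Sum>y\<in>{1..M}-{M}. (real M - real y) * (S y * w y))"
  proof (rule sum_mono)
    fix y assume y: "y \<in> {1..M}-{M}"
    hence "real M - real y \<ge> 1" by auto
    thus "S y * w y \<le> (real M - real y) * (S y * w y)" using Sn[of y] y
      by (metis DiffD1 mult_le_cancel_right1 not_le order_less_le_trans zero_less_one)
  qed
  have A2: "(\<Sum>y\<in>{1..M}-{M}. (real M - real y) * (S y * w y)) = (\<Sum>y\<in>{1..M}. (real M - real y) * (S y * w y))"
    using M1 by (subst sum.remove[of "{1..M}" M]) auto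
  have B: "(\<Sum>y\<in>{1..M}-{1}. S y * w y) \<le> (\<Sum>y\<in>{1..M}-{1}. (real y - 1) * (S y * w y))"
  proof (rule sum_mono)
    fix y assume y: "y \<in> {1..M}-{1}"
    hence "real y - 1 \<ge> 1" by auto
    thus "S y * w y \<le> (real y - 1) * (S y * w y)" using Sn[of y] y
      by (metis DiffD1 mult_le_cancel_right1 not_le order_less_le_trans zero_less_one)
  qed
  have B2: "(\<Sum>y\<in>{1..M}-{1}. (real y - 1) * (S y * w y)) = (\<Sum>y\<in>{1..M}. (real y - 1) * (S y * w y))"
    using M1 by (subst sum.remove[of "{1..M}" 1]) auto
  have E1: "(\<Sum>y\<in>{1..M}. (real M - real y) * (S y * w y)) = real M * (\<Sum>y\<in>{1..M}. S y * w y) - (\<Sum>y\<in>{1..M}. real y * (S y * w y))"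
    by (simp add: left_diff_distrib sum_subtractf sum_distrib_left)
  have E2: "(\<Sum>y\<in>{1..M}. (real y - 1) * (S y * w y)) = (\<Sum>y\<in>{1..M}. real y * (S y * w y)) - (\<Sum>y\<in>{1..M}. S y * w y)"
    by (simp add: left_diff_distrib sum_subtractf)
  show "(\<Sum>f\<in>UNIV. \<Sum>y\<in>{1..M}. a f y * real y * (w y + 1)) \<le>
          (\<Sum>y\<in>{1..M}. real y * (\<Sum>f\<in>UNIV. a f y)) + real M * (\<Sum>f\<in>UNIV. b f)
          - (\<Sum>f\<in>UNIV. b f) / 2 * (\<Sum>f\<in>UNIV. \<bar>b f / (\<Sum>f\<in>UNIV. b f) - a f M / (\<Sum>f\<in>UNIV. a f M)\<bar>)"
  proof -
    have E1': "(\<Sum>y\<in>{1..M}. (real M - real y) * (S y * w y)) = real M * (\<Sum>f\<in>UNIV. b f) - (\<Sum>y\<in>{1..M}. real y * (S y * w y))"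
      using E1 SB by simp
    show ?thesis using V tM A A2 E1' unfolding S_def by linarith
  qed
  show "(\<Sum>f\<in>UNIV. \<Sum>y\<in>{1..M}. a f y * real y * (w y + 1)) \<ge>
          (\<Sum>y\<in>{1..M}. real y * (\<Sum>f\<in>UNIV. a f y)) + (\<Sum>f\<in>UNIV. b f)
          + (\<Sum>f\<in>UNIV. b f) / 2 * (\<Sum>f\<in>UNIV. \<bar>b f / (\<Sum>f\<in>UNIV. b f) - a f 1 / (\<Sum>f\<in>UNIV. a f 1)\<bar>)"
    using V SB t1 B B2 E2 unfolding S_def by linarith
qed


theorem theorem1:
  fixes M :: nat and p :: "'x::finite \<Rightarrow> nat \<Rightarrow> bool \<Rightarrow> 'f::finite \<Rightarrow> real"
  assumes "M \<ge> 2"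
    and "is_joint_pmf M p"
    and "\<forall>x. PX M p x > 0"
    and "cond_indep_F_R p"
    and "\<forall>x. \<forall>y\<in>{1..M}. PRYX p True y x / PYX p y x > 0"
    and "\<forall>x. \<forall>y\<in>{1..M}. PRYX p True y x / PX M p x > 0"
    and "\<forall>x. PRX M p False x / PX M p x > 0"
  shows "theta_max M p - theta_shad_max M p \<ge> (\<Sum>x\<in>UNIV. tv_term M p x M * PX M p x)
         \<and> (\<Sum>x\<in>UNIV. tv_term M p x M * PX M p x) \<ge> 0
         \<and> theta_shad_min M p - theta_min M p \<ge> (\<Sum>x\<in>UNIV. tv_term M p x 1 * PX M p x)
         \<and> (\<Sum>x\<in>UNIV. tv_term M p x 1 * PX M p x) \<ge> 0"
proof -
  note M2 = assms(1)
  have pn: "\<And>x y r f. p x y r f \<ge> 0" using assms(2) unfolding is_joint_pmf_def by blast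
  define G where "G x = (\<Sum>y\<in>{1..M}. real y * (\<Sum>f\<in>UNIV. alpha M p x f y))" for x
  define B where "B x = (\<Sum>f\<in>UNIV. beta M p x f)" for x
  define T where "T x y0 = B x / 2 * (\<Sum>f\<in>UNIV. \<bar>beta M p x f / B x - alpha M p x f y0 / (\<Sum>f\<in>UNIV. alpha M p x f y0)\<bar>)" for x y0
  have tvT: "tv_term M p x y0 = T x y0" for x y0 unfolding tv_term_def T_def B_def Let_def by simp
  have PXp: "PX M p x > 0" for x using assms(3) by blast
  have an: "\<forall>f y. alpha M p x f y \<ge> 0" for x unfolding alpha_def using pn PXp by (simp add: divide_nonneg_pos)
  have sa: "\<forall>y\<in>{1..M}. (\<Sum>f\<in>UNIV. alpha M p x f y) > 0" for x
  proof
    fix y assume "y \<in> {1..M}"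
    hence "PRYX p True y x / PX M p x > 0" using assms(6) by blast
    thus "(\<Sum>f\<in>UNIV. alpha M p x f y) > 0"
      unfolding alpha_def PRYX_def by (simp add: sum_divide_distrib[symmetric])
  qed
  have Beq: "B x = PRX M p False x / PX M p x" for x
    unfolding B_def beta_def PRX_def by (simp add: sum_divide_distrib[symmetric] sum.swap[of _ UNIV])
  have Bp: "B x > 0" for x using Beq assms(7) by simp
  have sbB: "(\<Sum>f\<in>UNIV. beta M p x f) = B x" for x unfolding B_def ..
  have T0: "T x y0 \<ge> 0" for x y0 unfolding T_def using Bp[of x] by (intro mult_nonneg_nonneg sum_nonneg) auto
  have ne: "lp_values M p x \<noteq> {}" for x
  proof -
    define w where "w y = PRYX p False y x / PRYX p True y x" for y
    have key: "p x y True f * w y = p x y False f" if y: "y \<in> {1..M}" for y f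
    proof -
      have h6: "PRYX p True y x / PX M p x > 0" using assms(6) y by blast
      have a1: "PRYX p True y x > 0" using mult_pos_pos[OF h6 PXp[of x]] PXp[of x] by simp
      have "PRYX p True y x / PYX p y x > 0" using assms(5) y by blast
      hence a2: "PYX p y x > 0" using a1 by (simp add: zero_less_divide_iff)
      have c1: "p x y True f * PYX p y x = PFYX p f y x * PRYX p True y x"
       and c2: "p x y False f * PYX p y x = PFYX p f y x * PRYX p False y x"
        using assms(4) unfolding cond_indep_F_R_def by blast+
      have "p x y True f * PRYX p False y x * PYX p y x = p x y False f * PRYX p True y x * PYX p y x"
        using c1 c2 by algebra
      hence "p x y True f * PRYX p False y x = p x y False f * PRYX p True y x" using a2 by simp
      thus ?thesis unfolding w_def using a1 by (simp add: field_simps)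
    qed
    have wn: "\<forall>y\<in>{1..M}. w y \<ge> 0"
      unfolding w_def PRYX_def using pn by (auto intro!: divide_nonneg_nonneg sum_nonneg)
    have feas: "\<forall>f. (\<Sum>y\<in>{1..M}. alpha M p x f y * w y) = beta M p x f"
    proof
      fix f
      have "(\<Sum>y\<in>{1..M}. alpha M p x f y * w y) = (\<Sum>y\<in>{1..M}. p x y True f * w y / PX M p x)"
        unfolding alpha_def by simp
      also have "\<dots> = (\<Sum>y\<in>{1..M}. p x y False f / PX M p x)" using key by simp
      also have "\<dots> = beta M p x f" unfolding beta_def by (simp add: sum_divide_distrib)
      finally show "(\<Sum>y\<in>{1..M}. alpha M p x f y * w y) = beta M p x f" .
    qed
    show ?thesis unfolding lp_values_def using wn feas by blast
  qed
  have M1: "M \<ge> 1" using M2 by simp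
  have up: "Sup (lp_values M p x) \<le> G x + real M * B x - T x M" for x
  proof (rule cSup_least[OF ne])
    fix v assume "v \<in> lp_values M p x"
    then obtain w where "v = (\<Sum>f\<in>UNIV. \<Sum>y\<in>{1..M}. alpha M p x f y * real y * (w y + 1))"
      and wn: "\<forall>y\<in>{1..M}. w y \<ge> 0" and feas: "\<forall>f. (\<Sum>y\<in>{1..M}. alpha M p x f y * w y) = beta M p x f"
      unfolding lp_values_def by blast
    thus "v \<le> G x + real M * B x - T x M"
      using per_x(1)[OF M1 an wn feas sa] Bp[of x] unfolding G_def T_def sbB by simp
  qed
  have lo: "Inf (lp_values M p x) \<ge> G x + B x + T x 1" for x
  proof (rule cInf_greatest[OF ne])
    fix v assume "v \<in> lp_values M p x"
    then obtain w where "v = (\<Sum>f\<in>UNIV. \<Sum>y\<in>{1..M}. alpha M p x f y * real y * (w y + 1))"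
      and wn: "\<forall>y\<in>{1..M}. w y \<ge> 0" and feas: "\<forall>f. (\<Sum>y\<in>{1..M}. alpha M p x f y * w y) = beta M p x f"
      unfolding lp_values_def by blast
    thus "G x + B x + T x 1 \<le> v"
      using per_x(2)[OF M1 an wn feas sa] Bp[of x] unfolding G_def T_def sbB by simp
  qed
  have PG: "PX M p x * G x = (\<Sum>y\<in>{1..M}. \<Sum>f\<in>UNIV. real y * p x y True f)" for x
  proof -
    have "PX M p x * G x = (\<Sum>y\<in>{1..M}. PX M p x * (real y * ((\<Sum>f\<in>UNIV. p x y True f) / PX M p x)))"
      unfolding G_def alpha_def by (simp add: sum_distrib_left sum_divide_distrib[symmetric])
    also have "\<dots> = (\<Sum>y\<in>{1..M}. real y * (\<Sum>f\<in>UNIV. p x y True f))"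
      using PXp[of x] by (intro sum.cong) auto
    finally show ?thesis by (simp add: sum_distrib_left)
  qed
  have PB: "PX M p x * B x = (\<Sum>y\<in>{1..M}. \<Sum>f\<in>UNIV. p x y False f)" for x
    using PXp[of x] unfolding Beq PRX_def by simp
  have e1: "EY_R1 M p = (\<Sum>x\<in>UNIV. PX M p x * G x)"
    by (simp only: PG EY_R1_def)
  have e2: "PR0 M p = (\<Sum>x\<in>UNIV. PX M p x * B x)"
    by (simp only: PB PR0_def)
  have tmax: "theta_max M p = (\<Sum>x\<in>UNIV. PX M p x * G x + real M * (PX M p x * B x))"
    unfolding theta_max_def e1 e2 by (simp only: sum.distrib sum_distrib_left)
  have tmin: "theta_min M p = (\<Sum>x\<in>UNIV. PX M p x * G x + PX M p x * B x)"
    unfolding theta_min_def e1 e2 by (simp only: sum.distrib)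
  have r1: "theta_max M p - theta_shad_max M p \<ge> (\<Sum>x\<in>UNIV. tv_term M p x M * PX M p x)"
  proof -
    have "theta_max M p - theta_shad_max M p = (\<Sum>x\<in>UNIV. PX M p x * (G x + real M * B x - Sup (lp_values M p x)))"
      unfolding tmax theta_shad_max_def sum_subtractf[symmetric]
      by (intro sum.cong) (simp_all add: algebra_simps)
    moreover have "(\<Sum>x\<in>UNIV. tv_term M p x M * PX M p x) \<le> (\<Sum>x\<in>UNIV. PX M p x * (G x + real M * B x - Sup (lp_values M p x)))"
    proof (rule sum_mono)
      fix x :: 'x
      have "T x M \<le> G x + real M * B x - Sup (lp_values M p x)" using up[of x] by linarith
      thus "tv_term M p x M * PX M p x \<le> PX M p x * (G x + real M * B x - Sup (lp_values M p x))"
        unfolding tvT using PXp[of x] by (simp add: mult.commute mult_left_mono)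
    qed
    ultimately show ?thesis by simp
  qed
  have r3: "theta_shad_min M p - theta_min M p \<ge> (\<Sum>x\<in>UNIV. tv_term M p x 1 * PX M p x)"
  proof -
    have "theta_shad_min M p - theta_min M p = (\<Sum>x\<in>UNIV. PX M p x * (Inf (lp_values M p x) - G x - B x))"
      unfolding tmin theta_shad_min_def sum_subtractf[symmetric]
      by (intro sum.cong) (simp_all add: algebra_simps)
    moreover have "(\<Sum>x\<in>UNIV. tv_term M p x 1 * PX M p x) \<le> (\<Sum>x\<in>UNIV. PX M p x * (Inf (lp_values M p x) - G x - B x))"
    proof (rule sum_mono)
      fix x :: 'x
      have "T x 1 \<le> Inf (lp_values M p x) - G x - B x" using lo[of x] by linarith
      thus "tv_term M p x 1 * PX M p x \<le> PX M p x * (Inf (lp_values M p x) - G x - B x)"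
        unfolding tvT using PXp[of x] by (simp add: mult.commute mult_left_mono)
    qed
    ultimately show ?thesis by simp
  qed
  have r2: "(\<Sum>x\<in>UNIV. tv_term M p x y0 * PX M p x) \<ge> 0" for y0
    unfolding tvT using T0 PXp by (intro sum_nonneg mult_nonneg_nonneg) (auto simp: less_imp_le)
  show ?thesis using r1 r2 r3 by blast
qed

end
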